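(* With $\iota^\sharp\colon FL_H \to FL_G$, $\pi_1,\pi_2\colon FL_H \to \mathbf{P}^1$ and the cells as in the context, one has \[ (\iota^\sharp)^{-1}\left(X^G_{w_2}\right) \cap \pi_2^{-1}\left(Y^{\mathrm{GL}_2}_{w}\right) = (\iota^\sharp)^{-1}\left(C^G_{w_2}\right) \cap \pi_1^{-1}\left(C^{\mathrm{GL}_2}_w \cdot w^{-1}\right) \cap \pi_2^{-1}\left(C^{\mathrm{GL}_2}_{w}\right). \]
   Context: Let $G = \mathrm{GSp}_4$ be the group of $4\times 4$ matrices $g$ with $g^t J g = \nu(g) J$ for a scalar $\nu(g)$, where $J$ is the anti-diagonal matrix with anti-diagonal entries $(1,1,-1,-1)$ (reading rows top to bottom). Let $P \subset G$ be the Siegel parabolic (elements whose bottom-left $2\times2$ block is zero), $B_G$ the upper-triangular Borel, and $FL_G = P\backslash G$. For $g\in G$ let $c(g)$ be its bottom-left $2\times 2$ block; its row span depends only on $Pg$. The $B_G$-orbits on $FL_G$ are $C^G_{w_0},\dots,C^G_{w_3}$: $c(g)=0$; $c(g)$ of rank $1$ with row span $\langle(0,1)\rangle$; $c(g)$ of rank $1$ with row span $\neq\langle(0,1)\rangle$; $c(g)$ of rank $2$, respectively. Set $X^G_{w_2} = C^G_{w_0}\cup C^G_{w_1}\cup C^G_{w_2}$ (the closed locus where $c(g)$ is singular). For $\mathrm{GL}_2$ with upper-triangular Borel $B$, identify $B\backslash\mathrm{GL}_2 \cong \mathbf{P}^1$ by sending $Bg$ to the bottom row $(x:y)$ of $g$.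 Let $w = \begin{pmatrix}0&1\\-1&0\end{pmatrix}$. The Bruhat cells are $C^{\mathrm{GL}_2}_{\mathrm{id}} = \{(0:1)\}$ and $C^{\mathrm{GL}_2}_w = \{(x:y) : x \neq 0\}$; $Y^{\mathrm{GL}_2}_w = C^{\mathrm{GL}_2}_w$ (union of cells $\geq w$), and $C^{\mathrm{GL}_2}_w\cdot w^{-1} = B\backslash B\overline{B} = \{(x:y): y\neq 0\}$ with $\overline{B}$ the lower-triangular Borel. Let $H = \mathrm{GL}_2\times_{\mathrm{GL}_1}\mathrm{GL}_2$, $B_H$ its upper-triangular Borel, $FL_H = B_H\backslash H \cong \mathbf{P}^1\times\mathbf{P}^1$, with projections $\pi_1,\pi_2$ to the two factors. Let $\iota\colon H\to G$ be $\left[\begin{pmatrix}a&b\\c&d\end{pmatrix},\begin{pmatrix}a'&b'\\c'&d'\end{pmatrix}\right] \mapsto \begin{pmatrix}a&0&0&b\\0&a'&b'&0\\0&c'&d'&0\\c&0&0&d\end{pmatrix}$, and $\iota^\sharp\colon FL_H\to FL_G$, $B_Hh\mapsto P\iota(h)\tau^\sharp$, where $\tau^\sharp = \iota(\mathrm{id},w)^{-1}\tau w_2$, $\tau = \begin{pmatrix}1&0&0&0\\1&1&0&0\\0&0&1&0\\0&0&-1&1\end{pmatrix}$, and $w_2$ is the Kostant representative of $C^G_{w_2}$; explicitly $\iota^\sharp((x:y),(X:Y)) = Pg$ for some $g\in G$ with $c(g) = \begin{pmatrix}-X&Y\\-y&x\end{pmatrix}$. *)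

theory Defs
  imports "Jordan_Normal_Form.DL_Rank"
begin

(* Matrices over a field 'a, as Jordan_Normal_Form matrices (indices start at 0). *)

definition J4 :: "'a::field mat" where
  "J4 = mat_of_rows_list 4 [[0,0,0,1],[0,0,1,0],[0,-1,0,0],[-1,0,0,0]]"

definition GSp4 :: "'a::field mat set" where
  "GSp4 = {g \<in> carrier_mat 4 4. \<exists>\<nu>. \<nu> \<noteq> 0 \<and> g\<^sup>T * J4 * g = \<nu> \<cdot>\<^sub>m J4}"

(* Siegel parabolic (for documentation; FL_G = P\G) *)
definition siegelP :: "'a::field mat set" where
  "siegelP = {p \<in> GSp4. \<forall>i<2. \<forall>j<2. p $$ (i+2, j) = 0}"

definition cblock :: "'a::field mat \<Rightarrow> 'a mat" where
  "cblock g = mat 2 2 (\<lambda>(i,j). g $$ (i+2, j))"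

definition line01 :: "'a::field vec set" where
  "line01 = vec_space.row_space 2 (mat_of_rows_list 2 [[0,1]])"

definition crank :: "'a::field mat \<Rightarrow> nat" where
  "crank g = vec_space.rank 2 (cblock g)"

definition crowspan :: "'a::field mat \<Rightarrow> 'a vec set" where
  "crowspan g = vec_space.row_space 2 (cblock g)"

(* B_G-orbits on FL_G = P\G, represented by their (left P-invariant) preimages in G *)
definition CG0 :: "'a::field mat set" where
  "CG0 = {g \<in> GSp4. cblock g = 0\<^sub>m 2 2}"
definition CG1 :: "'a::field mat set" where
  "CG1 = {g \<in> GSp4. crank g = 1 \<and> crowspan g = line01}"
definition CG2 :: "'a::field mat set" where
  "CG2 = {g \<in> GSp4. crank g = 1 \<and> crowspan g \<noteq> line01}"
definition CG3 :: "'a::field mat set" where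
  "CG3 = {g \<in> GSp4. crank g = 2}"
definition XG2 :: "'a::field mat set" where
  "XG2 = CG0 \<union> CG1 \<union> CG2"

(* GL_2 and its flag variety B\GL_2 = P^1 via the bottom row (x:y) *)
definition GL2 :: "'a::field mat set" where
  "GL2 = {g \<in> carrier_mat 2 2. det g \<noteq> 0}"

definition wGL :: "'a::field mat" where
  "wGL = mat_of_rows_list 2 [[0,1],[-1,0]]"
definition wGL_inv :: "'a::field mat" where
  "wGL_inv = mat_of_rows_list 2 [[0,-1],[1,0]]"

(* Bruhat cells of GL_2 (as left B-invariant subsets of GL_2), bottom row (x:y) = (g10 : g11) *)
definition CGL_id :: "'a::field mat set" where
  "CGL_id = {g \<in> GL2. g $$ (1,0) = 0}"
definition CGL_w :: "'a::field mat set" where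
  "CGL_w = {g \<in> GL2. g $$ (1,0) \<noteq> 0}"
definition YGL_w :: "'a::field mat set" where
  "YGL_w = CGL_w"
definition CGL_w_winv :: "'a::field mat set" where
  "CGL_w_winv = (\<lambda>g. g * wGL_inv) ` CGL_w"

definition Hgrp :: "('a::field mat \<times> 'a mat) set" where
  "Hgrp = {(h1,h2). h1 \<in> GL2 \<and> h2 \<in> GL2 \<and> det h1 = det h2}"

definition iota :: "'a::field mat \<times> 'a mat \<Rightarrow> 'a mat" where
  "iota h = (case h of (h1,h2) \<Rightarrow> mat_of_rows_list 4
     [[h1 $$ (0,0), 0, 0, h1 $$ (0,1)],
      [0, h2 $$ (0,0), h2 $$ (0,1), 0],
      [0, h2 $$ (1,0), h2 $$ (1,1), 0],
      [h1 $$ (1,0), 0, 0, h1 $$ (1,1)]])"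

definition tau :: "'a::field mat" where
  "tau = mat_of_rows_list 4 [[1,0,0,0],[1,1,0,0],[0,0,1,0],[0,0,-1,1]]"

(* Kostant representative of C^G_{w_2} (c(w2) has row span <(1,0)>) *)
definition w2G :: "'a::field mat" where
  "w2G = mat_of_rows_list 4 [[0,1,0,0],[0,0,0,1],[1,0,0,0],[0,0,-1,0]]"

(* tau^sharp = iota(id,w)^{-1} tau w2, with iota(id,w)^{-1} = iota(id,w^{-1}) *)
definition tau_sharp :: "'a::field mat" where
  "tau_sharp = iota (1\<^sub>m 2, wGL_inv) * tau * w2G"

(* iota^sharp(B_H h) = P (iota h tau^sharp); we record the representative *)
definition iota_sharp :: "'a::field mat \<times> 'a mat \<Rightarrow> 'a mat" where
  "iota_sharp h = iota h * tau_sharp"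

end

theory Submission imports Defs begin

lemma det1: assumes "(B::'a::comm_ring_1 mat) \<in> carrier_mat 1 1" shows "det B = B $$ (0,0)"
proof -
  have "upper_triangular B" using assms unfolding upper_triangular_def by auto
  hence "det B = prod_list (diag_mat B)" using det_upper_triangular assms by blast
  also have "diag_mat B = [B $$ (0,0)]" using assms unfolding diag_mat_def by simp
  finally show ?thesis by simp
qed

lemma det2: assumes A: "(A::'a::comm_ring_1 mat) \<in> carrier_mat 2 2"
  shows "det A = A$$(0,0)*A$$(1,1) - A$$(0,1)*A$$(1,0)"
proof -
  have c00: "mat_delete A 0 0 \<in> carrier_mat 1 1" "mat_delete A 0 1 \<in> carrier_mat 1 1"
    using mat_delete_carrier[OF A] by auto
  have "det A = (\<Sum>j<2. A $$ (0,j) * cofactor A 0 j)" using laplace_expansion_row[OF A] by simp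
  also have "\<dots> = A $$ (0,0) * cofactor A 0 0 + A $$ (0,1) * cofactor A 0 1"
    by (simp add: numeral_2_eq_2)
  also have "cofactor A 0 0 = A$$(1,1)" unfolding cofactor_def
    using A det1[OF c00(1)] by (simp add: mat_delete_def)
  also have "cofactor A 0 1 = - A$$(1,0)" unfolding cofactor_def
    using A det1[OF c00(2)] by (simp add: mat_delete_def)
  finally show ?thesis by simp
qed

lemma ts: "(tau_sharp :: 'a::field mat) = mat_of_rows_list 4 [[0, 1, 0, 0], [-1, 0, 0, 0], [0, 1, 0, 1], [-1, 0, -1, 0]]"
  apply (rule eq_matI)
  apply (auto simp: tau_sharp_def iota_def tau_def w2G_def wGL_inv_def mat_of_rows_list_def scalar_prod_def
     numeral_eq_Suc less_Suc_eq)
  done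

lemma cb: "cblock (iota_sharp (h1,h2)) = mat_of_rows_list 2 [[-h2$$(1,0), h2$$(1,1)],[-h1$$(1,1), h1$$(1,0)]]"
  apply (rule eq_matI)
  apply (auto simp: cblock_def iota_sharp_def ts iota_def mat_of_rows_list_def scalar_prod_def numeral_eq_Suc less_Suc_eq)
  done

lemma row0_in: assumes "C \<in> carrier_mat 2 2"
  shows "vec 2 (\<lambda>j. C $$ (0,j)) \<in> vec_space.row_space 2 C"
proof -
  have "vec 2 (\<lambda>j. C $$ (0,j)) = C\<^sup>T *\<^sub>v vec 2 (\<lambda>i. if i = 0 then 1 else 0)"
    using assms by (auto intro!: eq_vecI simp: scalar_prod_def numeral_eq_Suc less_Suc_eq)
  thus ?thesis using vec_space.row_space_eq[OF assms] assms by auto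
qed

lemma line01_0: assumes "w \<in> (line01 :: 'a::field vec set)" shows "w $ 0 = 0"
proof -
  have M: "(mat_of_rows_list 2 [[0,1]] :: 'a mat) \<in> carrier_mat 1 2"
    by (simp add: mat_of_rows_list_def)
  have "w \<in> vec_space.row_space 2 (mat_of_rows_list 2 [[0,1]] :: 'a mat)" using assms unfolding line01_def .
  then obtain y where "(mat_of_rows_list 2 [[0,1]])\<^sup>T *\<^sub>v y = w" "y \<in> carrier_vec (dim_row (mat_of_rows_list 2 [[0,1]] :: 'a mat))"
    unfolding vec_space.row_space_eq[OF M] by blast
  thus ?thesis using M by (auto simp: mat_of_rows_list_def scalar_prod_def)
qed

theorem mainTheorem2:
  shows "{h \<in> (Hgrp :: ('a::field mat \<times> 'a mat) set). iota_sharp h \<in> XG2}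
           \<inter> {h \<in> Hgrp. snd h \<in> YGL_w}
       = {h \<in> Hgrp. iota_sharp h \<in> CG2}
           \<inter> {h \<in> Hgrp. fst h \<in> CGL_w_winv}
           \<inter> {h \<in> Hgrp. snd h \<in> CGL_w}"
proof (rule equalityI)
  show "{h \<in> (Hgrp :: ('a::field mat \<times> 'a mat) set). iota_sharp h \<in> CG2}
           \<inter> {h \<in> Hgrp. fst h \<in> CGL_w_winv}
           \<inter> {h \<in> Hgrp. snd h \<in> CGL_w} \<subseteq> {h \<in> Hgrp. iota_sharp h \<in> XG2}
           \<inter> {h \<in> Hgrp. snd h \<in> YGL_w}"
    by (auto simp: XG2_def YGL_w_def)
next
  show "{h \<in> (Hgrp :: ('a::field mat \<times> 'a mat) set). iota_sharp h \<in> XG2}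
           \<inter> {h \<in> Hgrp. snd h \<in> YGL_w} \<subseteq> {h \<in> Hgrp. iota_sharp h \<in> CG2}
           \<inter> {h \<in> Hgrp. fst h \<in> CGL_w_winv}
           \<inter> {h \<in> Hgrp. snd h \<in> CGL_w}"
  proof
    fix h assume hin: "h \<in> {h \<in> (Hgrp :: ('a::field mat \<times> 'a mat) set). iota_sharp h \<in> XG2}
           \<inter> {h \<in> Hgrp. snd h \<in> YGL_w}"
    obtain h1 h2 where h: "h = (h1,h2)" by (cases h)
    have H: "h1 \<in> GL2" "h2 \<in> GL2" "iota_sharp (h1,h2) \<in> XG2" "h2 \<in> CGL_w"
      using hin h by (auto simp: Hgrp_def YGL_w_def)
    define C where "C = cblock (iota_sharp (h1,h2))"
    have Cc: "C \<in> carrier_mat 2 2" unfolding C_def cblock_def by simp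
    have C: "C = mat_of_rows_list 2 [[-h2$$(1,0), h2$$(1,1)],[-h1$$(1,1), h1$$(1,0)]]"
      unfolding C_def by (rule cb)
    have X: "h2 $$ (1,0) \<noteq> 0" using H(4) by (simp add: CGL_w_def)
    have C00: "C $$ (0,0) = - h2 $$ (1,0)" by (simp add: C mat_of_rows_list_def)
    have n0: "C \<noteq> 0\<^sub>m 2 2" using X C00 by auto
    have n1: "crowspan (iota_sharp (h1,h2)) \<noteq> line01"
    proof
      assume a: "crowspan (iota_sharp (h1,h2)) = line01"
      have "vec 2 (\<lambda>j. C $$ (0,j)) \<in> line01"
        using row0_in[OF Cc] a unfolding crowspan_def C_def by simp
      hence "vec 2 (\<lambda>j. C $$ (0,j)) $ 0 = 0" by (rule line01_0)
      thus False using C00 X by simp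
    qed
    have CG2: "iota_sharp (h1,h2) \<in> CG2"
      using H(3) n0 n1 unfolding XG2_def CG0_def CG1_def C_def by auto
    hence "vec_space.rank 2 C = 1" unfolding CG2_def crank_def C_def by simp
    hence "det C = 0" using vec_space.det_rank_iff[OF Cc] by simp
    hence dC: "h2$$(1,1) * h1$$(1,1) = h2$$(1,0) * h1$$(1,0)"
      unfolding det2[OF Cc] by (simp add: C mat_of_rows_list_def algebra_simps)
    have h1c: "h1 \<in> carrier_mat 2 2" and dh1: "det h1 \<noteq> 0" using H(1) by (auto simp: GL2_def)
    have y: "h1 $$ (1,1) \<noteq> 0"
    proof
      assume y0: "h1 $$ (1,1) = 0"
      hence "h1 $$ (1,0) = 0" using dC X by simp
      thus False using y0 dh1 det2[OF h1c] by simp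
    qed
    define g where "g = h1 * wGL"
    have wc: "(wGL :: 'a mat) \<in> carrier_mat 2 2" "(wGL_inv :: 'a mat) \<in> carrier_mat 2 2"
      by (auto simp: wGL_def wGL_inv_def mat_of_rows_list_def)
    have gc: "g \<in> carrier_mat 2 2" unfolding g_def using h1c wc by auto
    have dw: "det (wGL :: 'a mat) = 1" using det2[OF wc(1)] by (simp add: wGL_def mat_of_rows_list_def)
    have "det g = det h1" unfolding g_def using det_mult[OF h1c wc(1)] dw by simp
    moreover have "g $$ (1,0) = - h1 $$ (1,1)" using h1c
      by (simp add: g_def wGL_def mat_of_rows_list_def scalar_prod_def numeral_eq_Suc)
    ultimately have gin: "g \<in> CGL_w" using gc dh1 y by (simp add: CGL_w_def GL2_def)
    have ww: "wGL * wGL_inv = (1\<^sub>m 2 :: 'a mat)"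
      by (rule eq_matI) (auto simp: wGL_def wGL_inv_def mat_of_rows_list_def scalar_prod_def numeral_eq_Suc less_Suc_eq)
    have "g * wGL_inv = h1" unfolding g_def
      using assoc_mult_mat[OF h1c wc(1) wc(2)] ww h1c by simp
    hence "h1 \<in> CGL_w_winv" unfolding CGL_w_winv_def using gin by force
    thus "h \<in> {h \<in> Hgrp. iota_sharp h \<in> CG2}
           \<inter> {h \<in> Hgrp. fst h \<in> CGL_w_winv}
           \<inter> {h \<in> Hgrp. snd h \<in> CGL_w}" using hin h CG2 H(4) by auto
  qed
qed

end
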